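(* Let $N\in\mathbb{N}$ and let $\mathbf{Y}$ be an $N$-sgrm over $\mathbb{R}^d$ on $[0,T]$. Then there exists exactly one sgrm $\mathbf{X}$ which is an extension of $\mathbf{Y}$ and is minimal in the sense that $\dot{\mathbf{X}}_{s,s}\in\mathcal{L}^N(\mathbb{R}^d)\subset\mathcal{L}((\mathbb{R}^d))$ for all $s\in[0,T]$. This $\mathbf{X}$ satisfies $\dot{\mathbf{X}}_{s,s}=\dot{\mathbf{Y}}_{s,s}$ for all $s$. Moreover, for every interval $[s,t]\subset[0,T]$, $\mathbf{X}_{s,t}$ depends only on $\{\mathbf{Y}|_{[u,v]}: s\le u\le v\le t\}$.
   Context: Fix $T>0$, $d\ge1$. $T((\mathbb{R}^d))$ is the algebra of formal tensor series $\mathbf{x}=\sum_w\mathbf{x}^we_w$ over words $w$ in letters $\{1,\dots,d\}$ (including the empty word $\mathbf{1}$) with concatenation product $\otimes$; $\langle\mathbf{x},w\rangle:=\mathbf{x}^w$. $T^N(\mathbb{R}^d)$ is the span of words of length $\le N$, viewed as the quotient of $T((\mathbb{R}^d))$ by series supported on words of length $>N$, with induced product $\otimes_N$ and projection $\mathrm{proj}_N$. Shuffle product: bilinear, $\mathbf{1}$ is the unit, $wi\sqcup\!\sqcup vj=(w\sqcup\!\sqcup vj)i+(wi\sqcup\!\sqcup v)j$. $\mathcal{L}(\mathbb{R}^d)$: Lie polynomials (Lie algebra generated by $e_1,\dots,e_d$ under the commutator of $\otimes$); $\mathcal{L}^N(\mathbb{R}^d)=\mathrm{proj}_N\mathcal{L}(\mathbb{R}^d)$,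 viewed inside $T((\mathbb{R}^d))$ as polynomials of degree $\le N$; $\mathcal{L}((\mathbb{R}^d))$: Lie series. An $N$-sgrm is a non-zero map $\mathbf{X}:[0,T]^2\to T^N(\mathbb{R}^d)$ with (i) $\langle\mathbf{X}_{s,t},v\sqcup\!\sqcup w\rangle=\langle\mathbf{X}_{s,t},v\rangle\langle\mathbf{X}_{s,t},w\rangle$ for all $s,t$ and words with $|v|+|w|\le N$; (ii) $\mathbf{X}_{s,u}\otimes_N\mathbf{X}_{u,t}=\mathbf{X}_{s,t}$; (iii) $t\mapsto\langle\mathbf{X}_{s,t},w\rangle$ smooth for each $|w|\le N$ and each $s$. An sgrm is a non-zero map $[0,T]^2\to T((\mathbb{R}^d))$ satisfying (i)–(iii) for all words, with $\otimes$. The diagonal derivative is $\dot{\mathbf{X}}_{s,s}:=\partial_t|_{t=s}\mathbf{X}_{s,t}$ (coordinatewise). An sgrm $\mathbf{X}$ is an extension of an $N$-sgrm $\mathbf{Y}$ if $\langle\mathbf{X}_{s,t},w\rangle=\langle\mathbf{Y}_{s,t},w\rangle$ for all $s,t$ and all words with $|w|\le N$. *)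

theory Defs
  imports "HOL-Analysis.Analysis"
begin

(* Letters: elements of a finite type 'a (d = CARD('a) >= 1).
   Words: 'a list.  Tensor series: coefficient functions 'a list => real. *)

type_synonym 'a series = "'a list \<Rightarrow> real"

definition unit_word :: "'a \<Rightarrow> 'a series" where
  "unit_word i = (\<lambda>u. if u = [i] then 1 else 0)"

definition conc :: "'a series \<Rightarrow> 'a series \<Rightarrow> 'a series" where
  "conc x y = (\<lambda>w. \<Sum>k\<le>length w. x (take k w) * y (drop k w))"

(* truncation proj_N; an element of T^N(R^d) is represented by a series
   supported on words of length <= N *)
definition proj :: "nat \<Rightarrow> 'a series \<Rightarrow> 'a series" where
  "proj N x = (\<lambda>w. if length w \<le> N then x w else 0)"

definition concN :: "nat \<Rightarrow> 'a series \<Rightarrow> 'a series \<Rightarrow> 'a series" where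
  "concN N x y = proj N (conc x y)"

(* shuffle recursion on reversed words: shr (rev w) (rev v) (rev u) is the
   coefficient of u in w shuffle v, following
   wi sh vj = (w sh vj)i + (wi sh v)j, unit = empty word *)
fun shr :: "'a list \<Rightarrow> 'a list \<Rightarrow> 'a list \<Rightarrow> real" where
  "shr [] v u = (if u = v then 1 else 0)"
| "shr (i # w) [] u = (if u = i # w then 1 else 0)"
| "shr (i # w) (j # v) [] = 0"
| "shr (i # w) (j # v) (k # u) =
     (if k = i then shr w (j # v) u else 0) + (if k = j then shr (i # w) v u else 0)"

definition shuffle :: "'a list \<Rightarrow> 'a list \<Rightarrow> 'a series" where
  "shuffle v w = (\<lambda>u. shr (rev v) (rev w) (rev u))"

(* <x, v sh w>; v sh w is supported on words of length |v|+|w| *)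
definition pair_shuffle :: "('a::finite) series \<Rightarrow> 'a list \<Rightarrow> 'a list \<Rightarrow> real" where
  "pair_shuffle x v w =
     (\<Sum>u\<in>{u. length u = length v + length w}. shuffle v w u * x u)"

inductive_set lie_poly :: "'a series set" where
  gen: "unit_word i \<in> lie_poly"
| add: "x \<in> lie_poly \<Longrightarrow> y \<in> lie_poly \<Longrightarrow> (\<lambda>w. x w + y w) \<in> lie_poly"
| smult: "x \<in> lie_poly \<Longrightarrow> (\<lambda>w. c * x w) \<in> lie_poly"
| bracket: "x \<in> lie_poly \<Longrightarrow> y \<in> lie_poly \<Longrightarrow>
            (\<lambda>w. conc x y w - conc y x w) \<in> lie_poly"

definition lieN :: "nat \<Rightarrow> 'a series set" where
  "lieN N = proj N ` lie_poly"

definition smooth_on :: "real set \<Rightarrow> (real \<Rightarrow> real) \<Rightarrow> bool" where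
  "smooth_on S g \<longleftrightarrow> (\<exists>f. (\<forall>x\<in>S. f 0 x = g x) \<and>
      (\<forall>k. \<forall>x\<in>S. (f k has_real_derivative f (Suc k) x) (at x within S)))"

definition nsgrm :: "real \<Rightarrow> nat \<Rightarrow> (real \<Rightarrow> real \<Rightarrow> ('a::finite) series) \<Rightarrow> bool" where
  "nsgrm T N Y \<longleftrightarrow>
     (\<forall>s\<in>{0..T}. \<forall>t\<in>{0..T}. \<forall>w. length w > N \<longrightarrow> Y s t w = 0) \<and>
     (\<exists>s\<in>{0..T}. \<exists>t\<in>{0..T}. \<exists>w. Y s t w \<noteq> 0) \<and>
     (\<forall>s\<in>{0..T}. \<forall>t\<in>{0..T}. \<forall>v w. length v + length w \<le> N \<longrightarrow>
        pair_shuffle (Y s t) v w = Y s t v * Y s t w) \<and>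
     (\<forall>s\<in>{0..T}. \<forall>u\<in>{0..T}. \<forall>t\<in>{0..T}. concN N (Y s u) (Y u t) = Y s t) \<and>
     (\<forall>s\<in>{0..T}. \<forall>w. length w \<le> N \<longrightarrow> smooth_on {0..T} (\<lambda>t. Y s t w))"

definition sgrm :: "real \<Rightarrow> (real \<Rightarrow> real \<Rightarrow> ('a::finite) series) \<Rightarrow> bool" where
  "sgrm T X \<longleftrightarrow>
     (\<exists>s\<in>{0..T}. \<exists>t\<in>{0..T}. \<exists>w. X s t w \<noteq> 0) \<and>
     (\<forall>s\<in>{0..T}. \<forall>t\<in>{0..T}. \<forall>v w.
        pair_shuffle (X s t) v w = X s t v * X s t w) \<and>
     (\<forall>s\<in>{0..T}. \<forall>u\<in>{0..T}. \<forall>t\<in>{0..T}. conc (X s u) (X u t) = X s t) \<and>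
     (\<forall>s\<in>{0..T}. \<forall>w. smooth_on {0..T} (\<lambda>t. X s t w))"

definition diag_deriv :: "real \<Rightarrow> (real \<Rightarrow> real \<Rightarrow> 'a series) \<Rightarrow> real \<Rightarrow> 'a series" where
  "diag_deriv T X s = (\<lambda>w. vector_derivative (\<lambda>t. X s t w) (at s within {0..T}))"

definition extension :: "real \<Rightarrow> nat \<Rightarrow> (real \<Rightarrow> real \<Rightarrow> 'a series) \<Rightarrow> (real \<Rightarrow> real \<Rightarrow> 'a series) \<Rightarrow> bool" where
  "extension T N X Y \<longleftrightarrow>
     (\<forall>s\<in>{0..T}. \<forall>t\<in>{0..T}. \<forall>w. length w \<le> N \<longrightarrow> X s t w = Y s t w)"

definition minimal_extension :: "real \<Rightarrow> nat \<Rightarrow> (real \<Rightarrow> real \<Rightarrow> ('a::finite) series) \<Rightarrow> (real \<Rightarrow> real \<Rightarrow> 'a series) \<Rightarrow> bool" where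
  "minimal_extension T N X Y \<longleftrightarrow>
     sgrm T X \<and> extension T N X Y \<and> (\<forall>s\<in>{0..T}. diag_deriv T X s \<in> lieN N)"

end

theory Submission
  imports Defs "HOL-Analysis.Analysis"
begin

lemma finite_len: "finite {u::('a::finite) list. length u = n}"
  using finite_lists_length_eq[of "UNIV::'a set" n] by simp

lemma conc_Nil[simp]: "conc x y [] = x [] * y []"
  by (simp add: conc_def)

lemma concN_short: "length w \<le> N \<Longrightarrow> concN N x y w = conc x y w"
  by (simp add: concN_def proj_def)

lemma shr_len: "shr a b c \<noteq> 0 \<Longrightarrow> length c = length a + length b"
proof (induction a b c rule: shr.induct)
  case (4 i w j v k u)
  then show ?case
    by (cases "k = i"; cases "k = j"; cases "shr w (j # v) u = 0") auto
qed (auto split: if_splits)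

lemma shuffle_len: "shuffle v w u \<noteq> 0 \<Longrightarrow> length u = length v + length w"
  unfolding shuffle_def using shr_len by fastforce

lemma shr_Nil2: "shr a [] c = (if c = a then 1 else 0)"
  by (cases a) auto

lemma shuffle_Nil_left: "shuffle [] w u = (if u = w then 1 else 0)"
  unfolding shuffle_def by auto

lemma shuffle_Nil_right: "shuffle w [] u = (if u = w then 1 else 0)"
  unfolding shuffle_def by (auto simp: shr_Nil2)

lemma shuffle_Nil_word: "shuffle v w [] = (if v = [] \<and> w = [] then 1 else 0)"
  unfolding shuffle_def by (cases "rev v"; cases "rev w") auto

lemma shuffle_snoc: "shuffle (v@[a]) (w@[b]) (u@[c]) =
   (if c = a then shuffle v (w@[b]) u else 0) + (if c = b then shuffle (v@[a]) w u else 0)"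
  unfolding shuffle_def by simp

lemma pair_shuffle_Nil_left[simp]: "pair_shuffle x [] w = x w"
proof -
  have "pair_shuffle x [] w = (\<Sum>u\<in>{u. length u = length w}. if u = w then x u else 0)"
    unfolding pair_shuffle_def by (auto simp: shuffle_Nil_left intro!: sum.cong)
  also have "\<dots> = x w" by (simp add: finite_len)
  finally show ?thesis .
qed

lemma pair_shuffle_Nil_right[simp]: "pair_shuffle x w [] = x w"
proof -
  have "pair_shuffle x w [] = (\<Sum>u\<in>{u. length u = length w}. if u = w then x u else 0)"
    unfolding pair_shuffle_def by (auto simp: shuffle_Nil_right intro!: sum.cong)
  also have "\<dots> = x w" by (simp add: finite_len)
  finally show ?thesis .
qed

lemma pair_shuffle_add: "pair_shuffle (\<lambda>u. x u + y u) v w = pair_shuffle x v w + pair_shuffle y v w"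
  unfolding pair_shuffle_def by (simp add: distrib_left sum.distrib)

lemma pair_shuffle_scale: "pair_shuffle (\<lambda>u. c * x u) v w = c * pair_shuffle x v w"
  unfolding pair_shuffle_def by (simp add: sum_distrib_left algebra_simps)

lemma sum_len_Suc:
  "(\<Sum>u\<in>{u::('a::finite) list. length u = Suc m}. f u) = (\<Sum>u\<in>{u. length u = m}. \<Sum>c\<in>UNIV. f (u@[c]))"
proof -
  have eq: "{u::'a list. length u = Suc m} = (\<lambda>(u,c). u@[c]) ` ({u. length u = m} \<times> UNIV)"
  proof (rule set_eqI, rule iffI)
    fix x :: "'a list" assume "x \<in> {u. length u = Suc m}"
    then have "x \<noteq> []" "length (butlast x) = m" by auto
    then show "x \<in> (\<lambda>(u,c). u@[c]) ` ({u. length u = m} \<times> UNIV)"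
      by (intro image_eqI[of _ _ "(butlast x, last x)"]) auto
  qed auto
  have inj: "inj_on (\<lambda>(u,c). u@[c]) ({u::'a list. length u = m} \<times> UNIV)"
    by (auto simp: inj_on_def)
  show ?thesis
    unfolding eq by (simp add: sum.reindex[OF inj] sum.cartesian_product finite_len prod.case_distrib)
qed

lemma sum_delta_mult:
  "(\<Sum>c\<in>(UNIV::('a::finite) set). (if c = a then A else 0) * (g c::real)) = A * g a"
proof -
  have "(\<Sum>c\<in>(UNIV::'a set). (if c = a then A else 0) * g c) = (\<Sum>c\<in>UNIV. if c = a then A * g c else 0)"
    by (intro sum.cong) auto
  then show ?thesis by simp
qed

lemma sum_two_delta:
  "(\<Sum>c\<in>(UNIV::('a::finite) set). ((if c = a then A else 0) + (if c = b then B else 0)) * (g c::real)) = A * g a + B * g b"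
  by (simp only: distrib_right sum.distrib sum_delta_mult)

definition rs :: "'a series \<Rightarrow> 'a \<Rightarrow> 'a series" where
  "rs z c = (\<lambda>u. z (u@[c]))"

lemma pair_shuffle_snoc:
  fixes z :: "('a::finite) series"
  shows "pair_shuffle z (v@[a]) (w@[b]) = pair_shuffle (rs z a) v (w@[b]) + pair_shuffle (rs z b) (v@[a]) w"
proof -
  have "pair_shuffle z (v@[a]) (w@[b]) =
     (\<Sum>u\<in>{u. length u = Suc (length v + length w + 1)}. shuffle (v@[a]) (w@[b]) u * z u)"
    unfolding pair_shuffle_def by simp
  also have "\<dots> = (\<Sum>u\<in>{u. length u = length v + length w + 1}. \<Sum>c\<in>UNIV.
       ((if c = a then shuffle v (w@[b]) u else 0) + (if c = b then shuffle (v@[a]) w u else 0)) * z (u@[c]))"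
    by (simp only: sum_len_Suc shuffle_snoc)
  also have "\<dots> = (\<Sum>u\<in>{u. length u = length v + length w + 1}. shuffle v (w@[b]) u * z (u@[a]) + shuffle (v@[a]) w u * z (u@[b]))"
    by (intro sum.cong refl) (simp add: sum_two_delta)
  also have "\<dots> = pair_shuffle (rs z a) v (w@[b]) + pair_shuffle (rs z b) (v@[a]) w"
    unfolding pair_shuffle_def rs_def by (simp add: sum.distrib)
  finally show ?thesis .
qed

lemma conc_snoc: "conc x y (u@[c]) = conc x (rs y c) u + y [] * rs x c u"
proof -
  have "conc x y (u@[c]) = (\<Sum>k\<le>length u. x (take k (u@[c])) * y (drop k (u@[c]))) + x (u@[c]) * y []"
    unfolding conc_def by (simp add: sum.atMost_Suc)
  also have "(\<Sum>k\<le>length u. x (take k (u@[c])) * y (drop k (u@[c]))) = (\<Sum>k\<le>length u. x (take k u) * y (drop k u @ [c]))"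
    by (intro sum.cong) auto
  finally show ?thesis unfolding conc_def rs_def by simp
qed

lemma sum_split_snoc:
  "(\<Sum>i\<le>length (v@[a]). f (take i (v@[a])) (drop i (v@[a]))) =
   (\<Sum>i\<le>length v. f (take i v) (drop i v @ [a])) + f (v@[a]) []"
proof -
  have "(\<Sum>i\<le>length (v@[a]). f (take i (v@[a])) (drop i (v@[a]))) =
     (\<Sum>i\<le>length v. f (take i (v@[a])) (drop i (v@[a]))) + f (v@[a]) []"
    by (simp add: sum.atMost_Suc)
  also have "(\<Sum>i\<le>length v. f (take i (v@[a])) (drop i (v@[a]))) = (\<Sum>i\<le>length v. f (take i v) (drop i v @ [a]))"
    by (intro sum.cong) auto
  finally show ?thesis .
qed

lemma rs_conc: "rs (conc x y) c = (\<lambda>u. conc x (rs y c) u + y [] * rs x c u)"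
  unfolding rs_def by (rule ext) (rule conc_snoc[unfolded rs_def])

lemma ps_conc:
  fixes x y :: "('a::finite) series"
  shows "pair_shuffle (conc x y) v w = (\<Sum>i\<le>length v. \<Sum>j\<le>length w.
           pair_shuffle x (take i v) (take j w) * pair_shuffle y (drop i v) (drop j w))"
proof (induction "length v + length w" arbitrary: v w x y rule: less_induct)
  case less
  show ?case
  proof (cases "v = []")
    case True
    then show ?thesis by (simp add: conc_def)
  next
    case vne: False
    show ?thesis
    proof (cases "w = []")
      case True then show ?thesis by (simp add: conc_def)
    next
      case wne: False
      obtain v' a where v: "v = v'@[a]" using vne rev_exhaust by blast
      obtain w' b where w: "w = w'@[b]" using wne rev_exhaust by blast
      define F where "F = (\<lambda>p q p' q'. pair_shuffle x p q * pair_shuffle y p' q')"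
      have IH1: "pair_shuffle (conc x (rs y a)) v' w = (\<Sum>i\<le>length v'. \<Sum>j\<le>length w.
           pair_shuffle x (take i v') (take j w) * pair_shuffle (rs y a) (drop i v') (drop j w))"
        using less v by simp
      have IH3: "pair_shuffle (conc x (rs y b)) v w' = (\<Sum>i\<le>length v. \<Sum>j\<le>length w'.
           pair_shuffle x (take i v) (take j w') * pair_shuffle (rs y b) (drop i v) (drop j w'))"
        using less w by simp
      have IH1': "pair_shuffle (conc x (rs y a)) v' w = (\<Sum>i\<le>length v'. (\<Sum>j\<le>length w'.
           pair_shuffle x (take i v') (take j w') * pair_shuffle (rs y a) (drop i v') (drop j w' @ [b]))
           + pair_shuffle x (take i v') w * pair_shuffle (rs y a) (drop i v') [])"
        unfolding IH1 unfolding w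
        apply (intro sum.cong refl)
        subgoal for i
          using sum_split_snoc[where f="\<lambda>p q. pair_shuffle x (take i v') p * pair_shuffle (rs y a) (drop i v') q"]
          by simp
        done
      have IH3': "pair_shuffle (conc x (rs y b)) v w' = (\<Sum>i\<le>length v'. \<Sum>j\<le>length w'.
           pair_shuffle x (take i v') (take j w') * pair_shuffle (rs y b) (drop i v' @ [a]) (drop j w'))
           + (\<Sum>j\<le>length w'. pair_shuffle x v (take j w') * pair_shuffle (rs y b) [] (drop j w'))"
        unfolding IH3 unfolding v
        using sum_split_snoc[where f="\<lambda>p q. \<Sum>j\<le>length w'. pair_shuffle x p (take j w') * pair_shuffle (rs y b) q (drop j w')"]
        by simp
      have "(\<Sum>i\<le>length v. \<Sum>j\<le>length w. F (take i v) (take j w) (drop i v) (drop j w))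
          = (\<Sum>i\<le>length v'. (\<Sum>j\<le>length w'. F (take i v') (take j w') (drop i v' @ [a]) (drop j w' @ [b]))
               + F (take i v') w (drop i v' @ [a]) [])
            + ((\<Sum>j\<le>length w'. F v (take j w') [] (drop j w' @ [b])) + F v w [] [])"
      proof -
        have "(\<Sum>i\<le>length v. \<Sum>j\<le>length w. F (take i v) (take j w) (drop i v) (drop j w))
          = (\<Sum>i\<le>length v'. \<Sum>j\<le>length w. F (take i v') (take j w) (drop i v' @ [a]) (drop j w))
            + (\<Sum>j\<le>length w. F v (take j w) [] (drop j w))"
          unfolding v
          using sum_split_snoc[where f="\<lambda>p q. \<Sum>j\<le>length w. F p (take j w) q (drop j w)"]
          by simp
        also have "\<dots> = (\<Sum>i\<le>length v'. (\<Sum>j\<le>length w'. F (take i v') (take j w') (drop i v' @ [a]) (drop j w' @ [b]))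
               + F (take i v') w (drop i v' @ [a]) [])
            + ((\<Sum>j\<le>length w'. F v (take j w') [] (drop j w' @ [b])) + F v w [] [])"
          unfolding w
          apply (intro arg_cong2[where f="(+)"] sum.cong refl)
          subgoal for i
            using sum_split_snoc[where f="\<lambda>p q. F (take i v') p (drop i v' @ [a]) q"] by simp
          using sum_split_snoc[where f="\<lambda>p q. F (v' @ [a]) p [] q"] by simp
        finally show ?thesis .
      qed
      also have "\<dots> = pair_shuffle (conc x (rs y a)) v' w + pair_shuffle (conc x (rs y b)) v w'
            + y [] * pair_shuffle x v w"
        unfolding IH1' IH3' unfolding F_def v w
        by (simp add: pair_shuffle_snoc sum.distrib distrib_left algebra_simps rs_def)
      also have "\<dots> = pair_shuffle (conc x y) v w"
        unfolding v w pair_shuffle_snoc[of "conc x y"] pair_shuffle_snoc[of x] rs_conc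
        by (simp add: pair_shuffle_add pair_shuffle_scale algebra_simps)
      finally show ?thesis unfolding F_def by simp
    qed
  qed
qed

definition one :: "'a series" where "one = (\<lambda>u. if u = [] then 1 else 0)"

lemma conc_one_right[simp]: "conc x one = x"
proof (rule ext)
  fix w :: "'a list"
  have "conc x one w = (\<Sum>k\<le>length w. if k = length w then x (take k w) else 0)"
    unfolding conc_def one_def by (intro sum.cong) auto
  then show "conc x one w = x w" by simp
qed

lemma conc_one_left[simp]: "conc one x = x"
proof (rule ext)
  fix w :: "'a list"
  have "conc one x w = (\<Sum>k\<le>length w. if k = 0 then x (drop k w) else 0)"
    unfolding conc_def one_def by (intro sum.cong) auto
  then show "conc one x w = x w" by simp
qed

lemma conc_assoc: "conc (conc x y) z = conc x (conc y z)"
proof (rule ext)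
  fix w :: "'a list"
  define n where "n = length w"
  define g where "g k l = x (take k w) * y (take l (drop k w)) * z (drop (l+k) w)" for k l
  have L: "conc (conc x y) z w = (\<Sum>m\<le>n. \<Sum>k\<le>m. g k (m-k))"
    unfolding conc_def g_def n_def
    by (auto simp: sum_distrib_right min_def drop_take intro!: sum.cong)
  have R: "conc x (conc y z) w = (\<Sum>k\<le>n. \<Sum>l\<le>n-k. g k l)"
    unfolding conc_def g_def n_def
    by (auto simp: sum_distrib_left mult.assoc intro!: sum.cong)
  have S: "Sigma {..n} (\<lambda>k. {..n-k}) = {(k,l). k+l \<le> n}" by auto
  have "(\<Sum>k\<le>n. \<Sum>l\<le>n-k. g k l) = (\<Sum>(k,l)\<in>{(k,l). k+l \<le> n}. g k l)"
    by (simp add: sum.Sigma S[symmetric])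
  also have "\<dots> = (\<Sum>m\<le>n. \<Sum>k\<le>m. g k (m-k))" by (rule sum.triangle_reindex_eq)
  finally show "conc (conc x y) z w = conc x (conc y z) w" using L R by simp
qed

lemma conc_unit_right: "conc x (unit_word a) u = (if u \<noteq> [] \<and> last u = a then x (butlast u) else 0)"
proof (cases u rule: rev_cases)
  case Nil then show ?thesis by (simp add: unit_word_def)
next
  case (snoc u' c)
  have "conc x (unit_word a) u = (\<Sum>k\<le>length u'. x (take k u) * unit_word a (drop k u)) + x u * unit_word a []"
    unfolding conc_def snoc by (simp add: sum.atMost_Suc)
  also have "(\<Sum>k\<le>length u'. x (take k u) * unit_word a (drop k u)) = (\<Sum>k\<le>length u'. if k = length u' \<and> c = a then x u' else 0)"
    unfolding snoc unit_word_def by (intro sum.cong) auto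
  finally show ?thesis using snoc by (simp add: unit_word_def)
qed

lemma conc_unit_left: "conc (unit_word a) x u = (if u \<noteq> [] \<and> hd u = a then x (tl u) else 0)"
proof (cases u)
  case Nil then show ?thesis by (simp add: unit_word_def)
next
  case (Cons c u')
  have "conc (unit_word a) x u = unit_word a [] * x u + (\<Sum>k\<le>length u'. unit_word a (take (Suc k) u) * x (drop (Suc k) u))"
    unfolding conc_def Cons by (simp only: length_Cons sum.atMost_Suc_shift) simp
  also have "(\<Sum>k\<le>length u'. unit_word a (take (Suc k) u) * x (drop (Suc k) u)) = (\<Sum>k\<le>length u'. if k = 0 \<and> c = a then x u' else 0)"
    unfolding Cons unit_word_def by (intro sum.cong) auto
  finally show ?thesis using Cons by (simp add: unit_word_def)
qed

fun lbr :: "'a list \<Rightarrow> 'a series" where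
  "lbr [] = (\<lambda>_. 0)"
| "lbr (a # ws) = (if ws = [] then unit_word a else
     (\<lambda>u. conc (lbr ws) (unit_word a) u - conc (unit_word a) (lbr ws) u))"

lemma lbr_lie: "ws \<noteq> [] \<Longrightarrow> lbr ws \<in> lie_poly"
proof (induction ws)
  case (Cons a ws)
  then show ?case by (auto intro: lie_poly.intros)
qed simp

definition Rc :: "'a list \<Rightarrow> 'a list \<Rightarrow> real" where
  "Rc w x = (\<Sum>k\<le>length x. (-1)^k * real (length x - k) * shuffle (rev (take k x)) (drop k x) w)"

definition Gc :: "'a list \<Rightarrow> 'a list \<Rightarrow> real" where
  "Gc w x = (\<Sum>k\<le>length x. (-1)^k * shuffle (rev (take k x)) (drop k x) w)"

lemma Tk_decomp:
  assumes "x \<noteq> []" "k \<le> length x"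
  shows "shuffle (rev (take k x)) (drop k x) (w@[a]) =
    (if k < length x \<and> a = last x then shuffle (rev (take k (butlast x))) (drop k (butlast x)) w else 0)
  + (if 0 < k \<and> a = hd x then shuffle (rev (take (k-1) (tl x))) (drop (k-1) (tl x)) w else 0)"
proof -
  consider "k = 0" | "k = length x" | "0 < k" "k < length x" using assms by linarith
  then show ?thesis
  proof cases
    case 1
    then show ?thesis using assms by (auto simp: shuffle_Nil_left snoc_eq_iff_butlast)
  next
    case 2
    have rx: "rev x = rev (tl x) @ [hd x]" using assms(1) by (cases x) auto
    have "(w @ [a] = rev x) \<longleftrightarrow> (a = hd x \<and> w = rev (tl x))" unfolding rx by auto
    then show ?thesis using 2 assms by (auto simp: shuffle_Nil_right shuffle_Nil_left)
  next
    case 3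
    obtain c x1 where x: "x = c # x1" using assms(1) by (cases x) auto
    define V where "V = rev (take (k-1) x1)"
    define Dr where "Dr = drop k x"
    have Dne: "Dr \<noteq> []" using 3 by (simp add: Dr_def)
    have tk: "rev (take k x) = V @ [c]" using 3 unfolding V_def x by (cases k) auto
    have D: "Dr = butlast Dr @ [last Dr]" using Dne by simp
    have lastD: "last Dr = last x" using 3 by (simp add: Dr_def last_drop)
    have D2: "Dr = drop (k-1) (tl x)" using 3 unfolding Dr_def x by (cases k) auto
    have bD: "butlast Dr = drop k (butlast x)" by (simp add: Dr_def drop_butlast)
    have tk2: "take k (butlast x) = take k x" using 3 by (simp add: take_butlast)
    have "shuffle (rev (take k x)) (drop k x) (w@[a]) = shuffle (V@[c]) (butlast Dr @ [last Dr]) (w@[a])"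
      using tk D Dr_def by simp
    also have "\<dots> = (if a = c then shuffle V (butlast Dr @ [last Dr]) w else 0)
       + (if a = last Dr then shuffle (V@[c]) (butlast Dr) w else 0)"
      by (rule shuffle_snoc)
    finally show ?thesis
      using 3 tk D[symmetric] D2 bD tk2 lastD unfolding V_def x by (auto simp: Dr_def)
  qed
qed

lemma Rc_Gc_rec:
  fixes x :: "'a list"
  assumes "x \<noteq> []"
  shows "Rc (w@[a]) x = (if a = last x then Rc w (butlast x) + Gc w (butlast x) else 0)
                       - (if a = hd x then Rc w (tl x) else 0)"
    and "Gc (w@[a]) x = (if a = last x then Gc w (butlast x) else 0)
                       - (if a = hd x then Gc w (tl x) else 0)"
proof -
  define m where "m = length x - 1"
  have lx: "length x = Suc m" using assms by (simp add: m_def)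
  define U1 where "U1 k = shuffle (rev (take k (butlast x))) (drop k (butlast x)) w" for k
  define U2 where "U2 k = shuffle (rev (take k (tl x))) (drop k (tl x)) w" for k
  have T: "shuffle (rev (take k x)) (drop k x) (w@[a]) =
     (if k < Suc m \<and> a = last x then U1 k else 0) + (if 0 < k \<and> a = hd x then U2 (k-1) else 0)"
    if "k \<le> Suc m" for k
    using Tk_decomp[OF assms, of k w a] that lx unfolding U1_def U2_def by simp
  have lb: "length (butlast x) = m" "length (tl x) = m" using lx by auto
  have A1: "(\<Sum>k\<le>Suc m. c k * (if k < Suc m \<and> P then U1 k else 0)) = (if P then (\<Sum>k\<le>m. c k * U1 k) else 0)"
    for c :: "nat \<Rightarrow> real" and P by (simp add: sum.atMost_Suc)
  have A2: "(\<Sum>k\<le>Suc m. c k * (if 0 < k \<and> P then U2 (k-1) else 0)) = (if P then (\<Sum>k\<le>m. c (Suc k) * U2 k) else 0)"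
    for c :: "nat \<Rightarrow> real" and P by (simp only: sum.atMost_Suc_shift) simp
  have "Rc (w@[a]) x = (\<Sum>k\<le>Suc m. ((-1)^k * real (Suc m - k)) *
     ((if k < Suc m \<and> a = last x then U1 k else 0) + (if 0 < k \<and> a = hd x then U2 (k-1) else 0)))"
    unfolding Rc_def lx by (intro sum.cong refl) (simp add: T mult.assoc)
  also have "\<dots> = (if a = last x then (\<Sum>k\<le>m. ((-1)^k * real (Suc m - k)) * U1 k) else 0)
     + (if a = hd x then (\<Sum>k\<le>m. ((-1)^(Suc k) * real (Suc m - Suc k)) * U2 k) else 0)"
    by (simp only: distrib_left sum.distrib A1 A2)
  also have "(\<Sum>k\<le>m. ((-1)^k * real (Suc m - k)) * U1 k) = Rc w (butlast x) + Gc w (butlast x)"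
    unfolding Rc_def Gc_def lb U1_def sum.distrib[symmetric]
    by (intro sum.cong refl) (simp add: of_nat_diff Suc_diff_le algebra_simps)
  also have "(\<Sum>k\<le>m. ((-1)^(Suc k) * real (Suc m - Suc k)) * U2 k) = - Rc w (tl x)"
    unfolding Rc_def lb U2_def sum_negf[symmetric]
    by (intro sum.cong refl) simp
  finally show "Rc (w@[a]) x = (if a = last x then Rc w (butlast x) + Gc w (butlast x) else 0)
                       - (if a = hd x then Rc w (tl x) else 0)" by simp
  have "Gc (w@[a]) x = (\<Sum>k\<le>Suc m. (-1)^k *
     ((if k < Suc m \<and> a = last x then U1 k else 0) + (if 0 < k \<and> a = hd x then U2 (k-1) else 0)))"
    unfolding Gc_def lx by (intro sum.cong refl) (simp add: T)
  also have "\<dots> = (if a = last x then (\<Sum>k\<le>m. (-1)^k * U1 k) else 0)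
     + (if a = hd x then (\<Sum>k\<le>m. (-1)^(Suc k) * U2 k) else 0)"
    by (simp only: distrib_left sum.distrib A1 A2)
  also have "(\<Sum>k\<le>m. (-1)^k * U1 k) = Gc w (butlast x)"
    unfolding Gc_def lb U1_def by simp
  also have "(\<Sum>k\<le>m. (-1)^(Suc k) * U2 k) = - Gc w (tl x)"
    unfolding Gc_def lb U2_def sum_negf[symmetric]
    by (intro sum.cong refl) simp
  finally show "Gc (w@[a]) x = (if a = last x then Gc w (butlast x) else 0)
                       - (if a = hd x then Gc w (tl x) else 0)" by simp
qed

lemma Gc_Nil_word: "Gc [] y = (if y = [] then 1 else 0)"
proof (cases "y = []")
  case False
  have "shuffle (rev (take k y)) (drop k y) [] = 0" for k
    using False by (auto simp: shuffle_Nil_word)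
  then show ?thesis using False by (simp add: Gc_def)
qed (simp add: Gc_def shuffle_Nil_word)

lemma Rc_Nil_word: "Rc [] y = 0"
proof -
  have s: "shuffle (rev (take k y)) (drop k y) [] = (if y = [] then 1 else 0)" for k
    by (auto simp: shuffle_Nil_word)
  have "(-1)^k * real (length y - k) * shuffle (rev (take k y)) (drop k y) [] = 0" for k
    unfolding s by simp
  then show ?thesis unfolding Rc_def by (intro sum.neutral) blast
qed

lemma Rc_Nil_right: "Rc w [] = 0"
  by (simp add: Rc_def)

lemma Gc_zero: "w \<noteq> [] \<Longrightarrow> Gc w x = 0"
proof (induction w arbitrary: x rule: rev_induct)
  case (snoc a w0)
  show ?case
  proof (cases "x = []")
    case True then show ?thesis by (simp add: Gc_def shuffle_Nil_left)
  next
    case xne: False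
    show ?thesis
    proof (cases "w0 = []")
      case True
      have "butlast x = [] \<longleftrightarrow> tl x = []" using xne by (cases x) auto
      moreover have "butlast x = [] \<Longrightarrow> last x = hd x" using xne by (cases x) auto
      ultimately show ?thesis using xne True Rc_Gc_rec(2)[OF xne, of "[]" a] by (simp add: Gc_Nil_word)
    next
      case False
      then show ?thesis using xne snoc.IH by (simp add: Rc_Gc_rec(2))
    qed
  qed
qed simp

lemma lbr_Rc: "w \<noteq> [] \<Longrightarrow> lbr (rev w) x = Rc w x"
proof (induction w arbitrary: x rule: rev_induct)
  case (snoc a w0)
  show ?case
  proof (cases "w0 = []")
    case True
    show ?thesis
    proof (cases "x = []")
      case True then show ?thesis using \<open>w0 = []\<close> by (simp add: Rc_Nil_right unit_word_def)
    next
      case False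
      have "(x = [a]) \<longleftrightarrow> (a = last x \<and> butlast x = [])" using False
        by (metis append_Nil snoc_eq_iff_butlast)
      then show ?thesis using False \<open>w0 = []\<close> Rc_Gc_rec(1)[OF False, of "[]" a]
        by (simp add: Rc_Nil_word Gc_Nil_word unit_word_def)
    qed
  next
    case False
    then have "rev w0 \<noteq> []" by simp
    then have "lbr (rev (w0@[a])) x = conc (lbr (rev w0)) (unit_word a) x - conc (unit_word a) (lbr (rev w0)) x"
      by simp
    also have "\<dots> = (if x \<noteq> [] \<and> last x = a then Rc w0 (butlast x) else 0) - (if x \<noteq> [] \<and> hd x = a then Rc w0 (tl x) else 0)"
      by (simp add: conc_unit_left conc_unit_right snoc.IH[OF False])
    also have "\<dots> = Rc (w0@[a]) x"
      by (cases "x = []") (auto simp: Rc_Nil_right Rc_Gc_rec(1) Gc_zero[OF False])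
    finally show ?thesis .
  qed
qed simp

lemma Rc_len: "length w \<noteq> length x \<Longrightarrow> Rc w x = 0"
  unfolding Rc_def
proof (intro sum.neutral ballI)
  fix k assume "length w \<noteq> length x" "k \<in> {..length x}"
  then have "shuffle (rev (take k x)) (drop k x) w = 0"
    using shuffle_len[of "rev (take k x)" "drop k x" w] by auto
  then show "(-1)^k * real (length x - k) * shuffle (rev (take k x)) (drop k x) w = 0" by simp
qed

lemma lie_zero: "(\<lambda>x. 0) \<in> lie_poly"
proof -
  have "(\<lambda>w. 0 * unit_word undefined w) \<in> lie_poly" by (intro lie_poly.smult lie_poly.gen)
  then show ?thesis by simp
qed

lemma lie_sum: "finite A \<Longrightarrow> (\<And>i. i \<in> A \<Longrightarrow> f i \<in> lie_poly) \<Longrightarrow>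
   (\<lambda>x. \<Sum>i\<in>A. c i * f i x) \<in> lie_poly"
proof (induction A rule: finite_induct)
  case empty then show ?case by (simp add: lie_zero)
next
  case (insert a A)
  have "(\<lambda>x. c a * f a x + (\<Sum>i\<in>A. c i * f i x)) \<in> lie_poly"
    using insert by (intro lie_poly.add lie_poly.smult) auto
  then show ?case using insert by simp
qed

lemma friedrichs:
  fixes P :: "('a::finite) series"
  assumes P0: "P [] = 0" and Pbig: "\<And>u. length u > N \<Longrightarrow> P u = 0"
    and prim: "\<And>v w. v \<noteq> [] \<Longrightarrow> w \<noteq> [] \<Longrightarrow> pair_shuffle P v w = 0"
  shows "P \<in> lieN N"
proof -
  define W where "W = {W::'a list. 1 \<le> length W \<and> length W \<le> N}"
  have finW: "finite W"
    using finite_lists_length_le[of "UNIV::'a set" N] unfolding W_def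
    by (rule rev_finite_subset) auto
  define L where "L = (\<lambda>x. \<Sum>V\<in>W. (P V / real (length V)) * lbr (rev V) x)"
  have Llie: "L \<in> lie_poly"
    unfolding L_def using finW by (intro lie_sum) (auto simp: W_def intro!: lbr_lie)
  have L_eq: "L x = (\<Sum>V\<in>W. (P V / real (length V)) * Rc V x)" for x
    unfolding L_def by (intro sum.cong refl) (auto simp: W_def lbr_Rc)
  have "proj N L x = P x" for x
  proof (cases "1 \<le> length x \<and> length x \<le> N")
    case False
    then consider "x = []" | "length x > N" by (cases x) auto
    then show ?thesis
    proof cases
      case 1 then show ?thesis by (simp add: proj_def L_eq Rc_Nil_right P0)
    next
      case 2 then show ?thesis by (simp add: proj_def Pbig)
    qed
  next
    case True
    define n where "n = length x"
    have n1: "n \<ge> 1" and nN: "n \<le> N" using True by (auto simp: n_def)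
    have ps: "(\<Sum>V\<in>W. shuffle (rev (take k x)) (drop k x) V * P V) = pair_shuffle P (rev (take k x)) (drop k x)"
      if "k \<le> n" for k
    proof -
      have sub: "{u. length u = length (rev (take k x)) + length (drop k x)} \<subseteq> W"
        using that n1 nN by (auto simp: W_def n_def)
      have "(\<Sum>V\<in>W. shuffle (rev (take k x)) (drop k x) V * P V) =
            (\<Sum>V\<in>{u. length u = length (rev (take k x)) + length (drop k x)}. shuffle (rev (take k x)) (drop k x) V * P V)"
      proof (rule sum.mono_neutral_right[OF finW sub], rule ballI)
        fix i assume "i \<in> W - {u. length u = length (rev (take k x)) + length (drop k x)}"
        then have "length i \<noteq> length (rev (take k x)) + length (drop k x)" by blast
        then have "shuffle (rev (take k x)) (drop k x) i = 0" using shuffle_len by blast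
        then show "shuffle (rev (take k x)) (drop k x) i * P i = 0" by simp
      qed
      then show ?thesis unfolding pair_shuffle_def .
    qed
    have "L x = (\<Sum>V\<in>W. (P V / real n) * Rc V x)"
      unfolding L_eq by (intro sum.cong refl) (auto simp: n_def Rc_len)
    also have "\<dots> = (1 / real n) * (\<Sum>k\<le>n. (-1)^k * real (n - k) *
         (\<Sum>V\<in>W. shuffle (rev (take k x)) (drop k x) V * P V))"
      unfolding Rc_def n_def[symmetric]
      by (simp add: sum_distrib_left sum_distrib_right algebra_simps sum.swap[of _ W])
    also have "\<dots> = (1 / real n) * (\<Sum>k\<le>n. (-1)^k * real (n - k) * pair_shuffle P (rev (take k x)) (drop k x))"
      by (simp add: ps)
    also have "(\<Sum>k\<le>n. (-1)^k * real (n - k) * pair_shuffle P (rev (take k x)) (drop k x))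
        = (\<Sum>k\<le>n. if k = 0 then real n * P x else 0)"
    proof (intro sum.cong refl)
      fix k assume "k \<in> {..n}"
      then consider "k = 0" | "k = n" | "0 < k" "k < n" by fastforce
      then show "(-1)^k * real (n - k) * pair_shuffle P (rev (take k x)) (drop k x) = (if k = 0 then real n * P x else 0)"
      proof cases
        case 3
        then have "rev (take k x) \<noteq> []" "drop k x \<noteq> []" by (auto simp: n_def)
        then show ?thesis using 3 prim by simp
      qed (use n1 in auto)
    qed
    also have "\<dots> = real n * P x" by simp
    finally have "L x = P x" using n1 by simp
    then show ?thesis using nN by (simp add: proj_def n_def)
  qed
  then have "P = proj N L" by auto
  then show ?thesis unfolding lieN_def using Llie by blast
qed

lemma deriv_transform:
  "(f has_real_derivative D) (at x within S) \<Longrightarrow> x \<in> S \<Longrightarrow> (\<And>y. y \<in> S \<Longrightarrow> f y = g y)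
   \<Longrightarrow> (g has_real_derivative D) (at x within S)"
proof -
  assume a: "(f has_real_derivative D) (at x within S)" "x \<in> S" "\<And>y. y \<in> S \<Longrightarrow> f y = g y"
  show ?thesis by (rule has_field_derivative_transform_within[OF a(1), of 1]) (use a in auto)
qed

definition dtw :: "real set \<Rightarrow> (real \<Rightarrow> real) \<Rightarrow> (real \<Rightarrow> real) \<Rightarrow> bool" where
  "dtw S g g' \<longleftrightarrow> (\<forall>x\<in>S. (g has_real_derivative g' x) (at x within S))"

lemma smooth_derivD:
  assumes "smooth_on S g" shows "\<exists>g'. dtw S g g' \<and> smooth_on S g'"
proof -
  obtain f where f0: "\<forall>x\<in>S. f 0 x = g x"
    and fd: "\<forall>k. \<forall>x\<in>S. (f k has_real_derivative f (Suc k) x) (at x within S)"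
    using assms unfolding smooth_on_def by blast
  have "dtw S g (f 1)"
    unfolding dtw_def using fd f0 by (auto intro: deriv_transform)
  moreover have "smooth_on S (f 1)"
    unfolding smooth_on_def using fd by (intro exI[of _ "\<lambda>k. f (Suc k)"]) auto
  ultimately show ?thesis by blast
qed

lemma smooth_derivI:
  assumes "dtw S g g'" "smooth_on S g'" shows "smooth_on S g"
proof -
  obtain f where f0: "\<forall>x\<in>S. f 0 x = g' x"
    and fd: "\<forall>k. \<forall>x\<in>S. (f k has_real_derivative f (Suc k) x) (at x within S)"
    using assms(2) unfolding smooth_on_def by blast
  define f' where "f' k = (case k of 0 \<Rightarrow> g | Suc j \<Rightarrow> f j)" for k
  have "\<forall>k. \<forall>x\<in>S. (f' k has_real_derivative f' (Suc k) x) (at x within S)"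
  proof (intro allI ballI)
    fix k x assume x: "x \<in> S"
    show "(f' k has_real_derivative f' (Suc k) x) (at x within S)"
    proof (cases k)
      case 0 then show ?thesis using assms(1) x f0 by (simp add: f'_def dtw_def)
    next
      case (Suc j) then show ?thesis using fd x by (simp add: f'_def)
    qed
  qed
  then show ?thesis unfolding smooth_on_def by (intro exI[of _ f']) (simp add: f'_def)
qed

lemma smooth_coind:
  assumes "C g" and step: "\<And>h. C h \<Longrightarrow> \<exists>h'. dtw S h h' \<and> C h'"
  shows "smooth_on S g"
proof -
  define nxt where "nxt h = (SOME h'. dtw S h h' \<and> C h')" for h
  have nx: "C h \<Longrightarrow> dtw S h (nxt h) \<and> C (nxt h)" for h
    unfolding nxt_def using step by (rule someI_ex)
  define f where "f k = (nxt ^^ k) g" for k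
  have Cf: "C (f k)" for k
    by (induction k) (auto simp: f_def assms(1) nx)
  have "dtw S (f k) (f (Suc k))" for k
    using nx[OF Cf[of k]] by (simp add: f_def)
  then show ?thesis unfolding smooth_on_def dtw_def
    by (intro exI[of _ f]) (simp add: f_def)
qed

inductive alg :: "real set \<Rightarrow> (real \<Rightarrow> real) \<Rightarrow> bool" for S where
  base: "smooth_on S g \<Longrightarrow> alg S g"
| const: "alg S (\<lambda>x. c)"
| add: "alg S f \<Longrightarrow> alg S g \<Longrightarrow> alg S (\<lambda>x. f x + g x)"
| mul: "alg S f \<Longrightarrow> alg S g \<Longrightarrow> alg S (\<lambda>x. f x * g x)"

lemma alg_deriv: "alg S h \<Longrightarrow> \<exists>h'. dtw S h h' \<and> alg S h'"
proof (induction rule: alg.induct)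
  case (base g)
  then show ?case using smooth_derivD alg.base by blast
next
  case (const c)
  show ?case by (rule exI[of _ "\<lambda>x. 0"]) (auto simp: dtw_def intro: alg.const)
next
  case (add f g)
  then obtain f' g' where "dtw S f f'" "alg S f'" "dtw S g g'" "alg S g'" by blast
  then show ?case
    by (intro exI[of _ "\<lambda>x. f' x + g' x"]) (auto simp: dtw_def intro!: alg.add derivative_intros)
next
  case (mul f g)
  then obtain f' g' where "dtw S f f'" "alg S f'" "dtw S g g'" "alg S g'" by blast
  then show ?case using mul.hyps
    by (intro exI[of _ "\<lambda>x. f' x * g x + g' x * f x"]) (auto simp: dtw_def intro!: alg.add alg.mul DERIV_mult)
qed

lemma alg_smooth: "alg S g \<Longrightarrow> smooth_on S g"
  by (rule smooth_coind[where C="alg S"]) (auto intro: alg_deriv)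

lemma smooth_cong: "smooth_on S g \<Longrightarrow> (\<And>x. x \<in> S \<Longrightarrow> g x = h x) \<Longrightarrow> smooth_on S h"
  unfolding smooth_on_def by auto

lemma smooth_const: "smooth_on S (\<lambda>x. c)"
  by (rule alg_smooth) (rule alg.const)

lemma smooth_add: "smooth_on S f \<Longrightarrow> smooth_on S g \<Longrightarrow> smooth_on S (\<lambda>x. f x + g x)"
  by (rule alg_smooth) (intro alg.add alg.base)

lemma smooth_mul: "smooth_on S f \<Longrightarrow> smooth_on S g \<Longrightarrow> smooth_on S (\<lambda>x. f x * g x)"
  by (rule alg_smooth) (intro alg.mul alg.base)

lemma smooth_diff: "smooth_on S f \<Longrightarrow> smooth_on S g \<Longrightarrow> smooth_on S (\<lambda>x. f x - g x)"
proof -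
  assume "smooth_on S f" "smooth_on S g"
  then have "smooth_on S (\<lambda>x. f x + (-1) * g x)" by (intro smooth_add smooth_mul smooth_const)
  then show ?thesis by simp
qed

lemma smooth_sum: "finite A \<Longrightarrow> (\<And>i. i \<in> A \<Longrightarrow> smooth_on S (f i)) \<Longrightarrow> smooth_on S (\<lambda>x. \<Sum>i\<in>A. f i x)"
  by (induction A rule: finite_induct) (auto intro: smooth_add smooth_const)

lemma smooth_cont: "smooth_on S g \<Longrightarrow> continuous_on S g"
  using smooth_derivD[of S g] unfolding dtw_def by (auto intro: DERIV_continuous_on)

lemma deriv_unique_int:
  fixes a b :: real
  assumes "a < b" "x \<in> {a..b}" "(f has_real_derivative d1) (at x within {a..b})"
    "(f has_real_derivative d2) (at x within {a..b})"
  shows "d1 = d2"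
  using vector_derivative_within_closed_interval[OF assms(1,2), of f d1]
    vector_derivative_within_closed_interval[OF assms(1,2), of f d2] assms(3,4)
  by (simp add: has_real_derivative_iff_has_vector_derivative)

lemma vd_eq:
  fixes a b :: real
  assumes "a < b" "x \<in> {a..b}" "(f has_real_derivative d) (at x within {a..b})"
  shows "vector_derivative f (at x within {a..b}) = d"
  using vector_derivative_within_closed_interval[OF assms(1,2), of f d] assms(3)
  by (simp add: has_real_derivative_iff_has_vector_derivative)

lemma smooth_vd:
  fixes T :: real
  assumes "0 < T" "smooth_on {0..T} g" "t \<in> {0..T}"
  shows "(g has_real_derivative vector_derivative g (at t within {0..T})) (at t within {0..T})"
proof -
  obtain g' where "dtw {0..T} g g'" using smooth_derivD[OF assms(2)] by blast
  then have d: "(g has_real_derivative g' t) (at t within {0..T})" using assms(3) by (simp add: dtw_def)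
  then show ?thesis using vd_eq[OF assms(1,3) d] by simp
qed

lemma sum_two_ends: "(n::nat) \<ge> 1 \<Longrightarrow> (\<Sum>k\<le>n. if k = 0 \<or> k = n then c else 0) = 2 * (c::real)"
proof -
  assume n: "n \<ge> 1"
  have "(\<Sum>k\<le>n. if k = 0 \<or> k = n then c else 0) = (\<Sum>k\<le>n. (if k = 0 then c else 0) + (if k = n then c else 0))"
    using n by (intro sum.cong) auto
  also have "\<dots> = 2 * c" using n by (simp add: sum.distrib)
  finally show ?thesis .
qed

lemma idem_one:
  assumes idem: "\<And>u. length u \<le> K \<Longrightarrow> conc x x u = x u" and x0: "x [] = 1"
  shows "length u \<le> K \<Longrightarrow> u \<noteq> [] \<Longrightarrow> x u = 0"
proof (induction "length u" arbitrary: u rule: less_induct)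
  case less
  define n where "n = length u"
  have n1: "n \<ge> 1" using less.prems by (cases u) (auto simp: n_def)
  have "conc x x u = (\<Sum>k\<le>n. if k = 0 \<or> k = n then x u else 0)"
    unfolding conc_def n_def[symmetric]
  proof (intro sum.cong refl)
    fix k assume k: "k \<in> {..n}"
    show "x (take k u) * x (drop k u) = (if k = 0 \<or> k = n then x u else 0)"
    proof (cases "k = 0 \<or> k = n")
      case True then show ?thesis using x0 by (auto simp: n_def)
    next
      case False
      then have "take k u \<noteq> []" "length (take k u) < length u" "length (take k u) \<le> K"
        using k less.prems by (auto simp: n_def)
      then have "x (take k u) = 0" using less.hyps by blast
      then show ?thesis using False by simp
    qed
  qed
  also have "\<dots> = 2 * x u" using n1 by (rule sum_two_ends)
  finally show ?case using idem[OF less.prems(1)] by simp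
qed

lemma one_Nil[simp]: "one [] = 1" and one_Cons[simp]: "one (a # u) = 0"
  by (auto simp: one_def)

lemma nsgrm_props:
  assumes "nsgrm T N Y"
  shows nsgrm_big: "\<And>s t w. s \<in> {0..T} \<Longrightarrow> t \<in> {0..T} \<Longrightarrow> length w > N \<Longrightarrow> Y s t w = 0"
    and nsgrm_shuffle: "\<And>s t v w. s \<in> {0..T} \<Longrightarrow> t \<in> {0..T} \<Longrightarrow> length v + length w \<le> N \<Longrightarrow>
        pair_shuffle (Y s t) v w = Y s t v * Y s t w"
    and nsgrm_chen: "\<And>s u t w. s \<in> {0..T} \<Longrightarrow> u \<in> {0..T} \<Longrightarrow> t \<in> {0..T} \<Longrightarrow> length w \<le> N \<Longrightarrow>
        conc (Y s u) (Y u t) w = Y s t w"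
    and nsgrm_smooth: "\<And>s w. s \<in> {0..T} \<Longrightarrow> smooth_on {0..T} (\<lambda>t. Y s t w)"
proof -
  show big: "\<And>s t w. s \<in> {0..T} \<Longrightarrow> t \<in> {0..T} \<Longrightarrow> length w > N \<Longrightarrow> Y s t w = 0"
    using assms unfolding nsgrm_def by blast
  show "\<And>s t v w. s \<in> {0..T} \<Longrightarrow> t \<in> {0..T} \<Longrightarrow> length v + length w \<le> N \<Longrightarrow>
        pair_shuffle (Y s t) v w = Y s t v * Y s t w"
    using assms unfolding nsgrm_def by blast
  show "\<And>s u t w. s \<in> {0..T} \<Longrightarrow> u \<in> {0..T} \<Longrightarrow> t \<in> {0..T} \<Longrightarrow> length w \<le> N \<Longrightarrow>
        conc (Y s u) (Y u t) w = Y s t w"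
    using assms unfolding nsgrm_def by (metis concN_short)
  fix s w assume s: "s \<in> {0..T}"
  show "smooth_on {0..T} (\<lambda>t. Y s t w)"
  proof (cases "length w \<le> N")
    case True then show ?thesis using assms s unfolding nsgrm_def by blast
  next
    case False
    show ?thesis by (rule smooth_cong[OF smooth_const[of _ 0]]) (use big s False in auto)
  qed
qed

lemma nsgrm_one:
  assumes Y: "nsgrm T N Y" and s: "s \<in> {0..T}" and t: "t \<in> {0..T}"
  shows "Y s t [] = 1"
proof -
  have idem: "Y a b [] * Y a b [] = Y a b []" if "a \<in> {0..T}" "b \<in> {0..T}" for a b
    using nsgrm_shuffle[OF Y that, of "[]" "[]"] by simp
  have mult: "Y a b [] = Y a c [] * Y c b []" if "a \<in> {0..T}" "b \<in> {0..T}" "c \<in> {0..T}" for a b c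
    using nsgrm_chen[OF Y that(1,3,2), of "[]"] by simp
  obtain s0 t0 w0 where st0: "s0 \<in> {0..T}" "t0 \<in> {0..T}" and w0: "Y s0 t0 w0 \<noteq> 0"
    using Y unfolding nsgrm_def by blast
  have "length w0 \<le> N" using w0 nsgrm_big[OF Y st0] by force
  then have "Y s0 t0 w0 = Y s0 t0 w0 * Y s0 t0 []"
    using nsgrm_shuffle[OF Y st0, of w0 "[]"] by simp
  then have "Y s0 t0 [] = 1" using w0 by simp
  then have "1 = Y s0 s [] * (Y s t [] * Y t t0 [])"
    using mult[OF st0(1) st0(2) s] mult[OF s st0(2) t] by simp
  then have "Y s t [] \<noteq> 0" by auto
  then show ?thesis using idem[OF s t] by simp
qed

lemma nsgrm_diag:
  assumes Y: "nsgrm T N Y" and s: "s \<in> {0..T}"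
  shows "Y s s = one"
proof (rule ext)
  fix u :: "'a list"
  show "Y s s u = one u"
  proof (cases "u = []")
    case True then show ?thesis using nsgrm_one[OF Y s s] by simp
  next
    case False
    show ?thesis
    proof (cases "length u \<le> N")
      case True
      have "Y s s u = 0"
        by (rule idem_one[where K=N]) (use nsgrm_chen[OF Y s s s] nsgrm_one[OF Y s s] True False in auto)
      then show ?thesis using False by (cases u) auto
    next
      case False2: False
      then show ?thesis using nsgrm_big[OF Y s s] False by (cases u) auto
    qed
  qed
qed

lemma sgrm_props:
  assumes "sgrm T X"
  shows sgrm_shuffle: "\<And>s t v w. s \<in> {0..T} \<Longrightarrow> t \<in> {0..T} \<Longrightarrow>
        pair_shuffle (X s t) v w = X s t v * X s t w"
    and sgrm_chen: "\<And>s u t. s \<in> {0..T} \<Longrightarrow> u \<in> {0..T} \<Longrightarrow> t \<in> {0..T} \<Longrightarrow>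
        conc (X s u) (X u t) = X s t"
    and sgrm_smooth: "\<And>s w. s \<in> {0..T} \<Longrightarrow> smooth_on {0..T} (\<lambda>t. X s t w)"
  using assms unfolding sgrm_def by blast+

lemma sgrm_one:
  assumes X: "sgrm T X" and s: "s \<in> {0..T}" and t: "t \<in> {0..T}"
  shows "X s t [] = 1"
proof -
  have idem: "X a b [] * X a b [] = X a b []" if "a \<in> {0..T}" "b \<in> {0..T}" for a b
    using sgrm_shuffle[OF X that, of "[]" "[]"] by simp
  have mult: "X a b [] = X a c [] * X c b []" if "a \<in> {0..T}" "b \<in> {0..T}" "c \<in> {0..T}" for a b c
    using sgrm_chen[OF X that(1,3,2)] by (metis conc_Nil)
  obtain s0 t0 w0 where st0: "s0 \<in> {0..T}" "t0 \<in> {0..T}" and w0: "X s0 t0 w0 \<noteq> 0"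
    using X unfolding sgrm_def by blast
  have "X s0 t0 w0 = X s0 t0 w0 * X s0 t0 []"
    using sgrm_shuffle[OF X st0, of w0 "[]"] by simp
  then have "X s0 t0 [] = 1" using w0 by simp
  then have "1 = X s0 s [] * (X s t [] * X t t0 [])"
    using mult[OF st0(1) st0(2) s] mult[OF s st0(2) t] by simp
  then have "X s t [] \<noteq> 0" by auto
  then show ?thesis using idem[OF s t] by simp
qed

lemma sgrm_diag:
  assumes X: "sgrm T X" and s: "s \<in> {0..T}"
  shows "X s s = one"
proof (rule ext)
  fix u :: "'a list"
  show "X s s u = one u"
  proof (cases "u = []")
    case True then show ?thesis using sgrm_one[OF X s s] by simp
  next
    case False
    have "X s s u = 0"
      by (rule idem_one[where K="length u"]) (use sgrm_chen[OF X s s s] sgrm_one[OF X s s] False in auto)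
    then show ?thesis using False by (cases u) auto
  qed
qed

lemma ps_deriv:
  fixes F :: "real \<Rightarrow> ('a::finite) series"
  assumes "\<And>u. ((\<lambda>t. F t u) has_real_derivative F' u) (at x within S')"
  shows "((\<lambda>t. pair_shuffle (F t) v w) has_real_derivative pair_shuffle F' v w) (at x within S')"
  unfolding pair_shuffle_def by (intro DERIV_sum DERIV_cmult assms)

lemma chen_ode:
  assumes "t \<in> S" "\<And>t'. t' \<in> S \<Longrightarrow> Z s t' w = conc (Z s t) (Z t t') w"
    "\<And>u. ((\<lambda>t'. Z t t' u) has_real_derivative E u) (at t within S)"
  shows "((\<lambda>t'. Z s t' w) has_real_derivative conc (Z s t) E w) (at t within S)"
proof -
  have "((\<lambda>t'. conc (Z s t) (Z t t') w) has_real_derivative conc (Z s t) E w) (at t within S)"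
    unfolding conc_def by (intro DERIV_sum DERIV_cmult assms)
  then show ?thesis by (rule deriv_transform) (use assms in auto)
qed

context
  fixes T :: real
  assumes T: "T > 0"
begin

lemma nsgrm_dd:
  assumes Y: "nsgrm T N Y" and t: "t \<in> {0..T}"
  shows "((\<lambda>t'. Y t t' u) has_real_derivative diag_deriv T Y t u) (at t within {0..T})"
  unfolding diag_deriv_def using smooth_vd[OF T nsgrm_smooth[OF Y t] t] by simp

lemma nsgrm_ode:
  assumes Y: "nsgrm T N Y" and s: "s \<in> {0..T}" and t: "t \<in> {0..T}" and w: "length w \<le> N"
  shows "((\<lambda>t'. Y s t' w) has_real_derivative conc (Y s t) (diag_deriv T Y t) w) (at t within {0..T})"
  by (rule chen_ode[OF t]) (use nsgrm_chen[OF Y s t _ w] nsgrm_dd[OF Y t] in auto)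

lemma sgrm_dd:
  assumes X: "sgrm T X" and t: "t \<in> {0..T}"
  shows "((\<lambda>t'. X t t' u) has_real_derivative diag_deriv T X t u) (at t within {0..T})"
  unfolding diag_deriv_def using smooth_vd[OF T sgrm_smooth[OF X t] t] by simp

lemma sgrm_ode:
  assumes X: "sgrm T X" and s: "s \<in> {0..T}" and t: "t \<in> {0..T}"
  shows "((\<lambda>t'. X s t' w) has_real_derivative conc (X s t) (diag_deriv T X t) w) (at t within {0..T})"
  by (rule chen_ode[OF t]) (use sgrm_chen[OF X s t] sgrm_dd[OF X t] in auto)

lemma uniq0:
  assumes "t \<in> {0..T}" "(f has_real_derivative d1) (at t within {0..T})"
    "(f has_real_derivative d2) (at t within {0..T})"
  shows "d1 = d2"
  using deriv_unique_int[of 0 T t f d1 d2] T assms by simp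

lemma DY_Nil:
  assumes Y: "nsgrm T N Y" and t: "t \<in> {0..T}"
  shows "diag_deriv T Y t [] = 0"
proof -
  have "((\<lambda>t'. Y t t' []) has_real_derivative 0) (at t within {0..T})"
    by (rule deriv_transform[OF DERIV_const[of 1] t]) (use nsgrm_one[OF Y t] in auto)
  then show ?thesis using uniq0[OF t nsgrm_dd[OF Y t]] by simp
qed

lemma DY_big:
  assumes Y: "nsgrm T N Y" and t: "t \<in> {0..T}" and u: "length u > N"
  shows "diag_deriv T Y t u = 0"
proof -
  have "((\<lambda>t'. Y t t' u) has_real_derivative 0) (at t within {0..T})"
    by (rule deriv_transform[OF DERIV_const[of 0] t]) (use nsgrm_big[OF Y t _ u] in auto)
  then show ?thesis using uniq0[OF t nsgrm_dd[OF Y t]] by simp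
qed

lemma DY_prim:
  assumes Y: "nsgrm T N Y" and t: "t \<in> {0..T}" and v: "v \<noteq> []" and w: "w \<noteq> []"
  shows "pair_shuffle (diag_deriv T Y t) v w = 0"
proof (cases "length v + length w \<le> N")
  case True
  have d1: "((\<lambda>t'. pair_shuffle (Y t t') v w) has_real_derivative pair_shuffle (diag_deriv T Y t) v w) (at t within {0..T})"
    by (rule ps_deriv) (rule nsgrm_dd[OF Y t])
  have d2: "((\<lambda>t'. Y t t' v * Y t t' w) has_real_derivative
      diag_deriv T Y t v * Y t t w + diag_deriv T Y t w * Y t t v) (at t within {0..T})"
    by (intro DERIV_mult nsgrm_dd[OF Y t])
  have "Y t t v = 0" "Y t t w = 0" using nsgrm_diag[OF Y t] v w by (cases v; cases w; auto)+
  then have d2z: "((\<lambda>t'. Y t t' v * Y t t' w) has_real_derivative 0) (at t within {0..T})"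
    using d2 by simp
  have eq: "\<And>y. y \<in> {0..T} \<Longrightarrow> Y t y v * Y t y w = pair_shuffle (Y t y) v w"
    using nsgrm_shuffle[OF Y t _ True] by simp
  have d2': "((\<lambda>t'. pair_shuffle (Y t t') v w) has_real_derivative 0) (at t within {0..T})"
    by (rule deriv_transform[OF d2z t eq])
  show ?thesis using uniq0[OF t d1 d2'] .
next
  case False
  show ?thesis unfolding pair_shuffle_def
    by (intro sum.neutral ballI) (use DY_big[OF Y t] False in auto)
qed

lemma DY_smooth:
  assumes Y: "nsgrm T N Y"
  shows "smooth_on {0..T} (\<lambda>t. diag_deriv T Y t u)"
proof (induction "length u" arbitrary: u rule: less_induct)
  case less
  have T0: "0 \<in> {0..T}" using T by simp
  show ?case
  proof (cases "u = []")
    case True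
    show ?thesis by (rule smooth_cong[OF smooth_const[of _ 0]]) (use DY_Nil[OF Y] True in auto)
  next
    case une: False
    show ?thesis
    proof (cases "length u \<le> N")
      case False
      show ?thesis by (rule smooth_cong[OF smooth_const[of _ 0]]) (use DY_big[OF Y] False in auto)
    next
      case True
      define n where "n = length u"
      obtain g' where g': "dtw {0..T} (\<lambda>t. Y 0 t u) g'" "smooth_on {0..T} g'"
        using smooth_derivD[OF nsgrm_smooth[OF Y T0]] by blast
      define M where "M t = (\<Sum>k\<le>n. if 0 < k \<and> k < n then Y 0 t (take k u) * diag_deriv T Y t (drop k u) else 0)" for t
      have Msm: "smooth_on {0..T} M"
        unfolding M_def
      proof (intro smooth_sum, simp)
        fix k assume "k \<in> {..n}"
        show "smooth_on {0..T} (\<lambda>t. if 0 < k \<and> k < n then Y 0 t (take k u) * diag_deriv T Y t (drop k u) else 0)"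
        proof (cases "0 < k \<and> k < n")
          case True
          then have "length (drop k u) < length u" unfolding n_def by (simp, linarith)
          then show ?thesis using True less.hyps
            by (simp add: smooth_mul nsgrm_smooth[OF Y T0])
        next
          case False show ?thesis unfolding if_not_P[OF False] by (rule smooth_const)
        qed
      qed
      have "diag_deriv T Y t u = g' t - M t" if t: "t \<in> {0..T}" for t
      proof -
        have "g' t = conc (Y 0 t) (diag_deriv T Y t) u"
          using uniq0[OF t _ nsgrm_ode[OF Y T0 t True]] g'(1) t by (auto simp: dtw_def)
        also have "\<dots> = (\<Sum>k\<le>n. (if k = 0 then diag_deriv T Y t u else 0) +
            (if 0 < k \<and> k < n then Y 0 t (take k u) * diag_deriv T Y t (drop k u) else 0))"
          unfolding conc_def n_def[symmetric]
          by (intro sum.cong refl) (auto simp: nsgrm_one[OF Y T0 t] DY_Nil[OF Y t] n_def)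
        also have "\<dots> = diag_deriv T Y t u + M t" by (simp add: sum.distrib M_def)
        finally show ?thesis by simp
      qed
      then show ?thesis by (intro smooth_cong[OF smooth_diff[OF g'(2) Msm]]) auto
    qed
  qed
qed

lemma DY_lie:
  assumes Y: "nsgrm T N Y" and t: "t \<in> {0..T}"
  shows "diag_deriv T Y t \<in> lieN N"
  by (rule friedrichs) (use DY_Nil[OF Y t] DY_big[OF Y t] DY_prim[OF Y t] in auto)

end

lemma ode_unique:
  fixes f g :: "real \<Rightarrow> 'a series" and a b :: real
  assumes u: "u \<in> {a..b}"
    and df: "\<And>t w. t \<in> {a..b} \<Longrightarrow> ((\<lambda>t. f t w) has_real_derivative conc (f t) (E t) w) (at t within {a..b})"
    and dg: "\<And>t w. t \<in> {a..b} \<Longrightarrow> ((\<lambda>t. g t w) has_real_derivative conc (g t) (E t) w) (at t within {a..b})"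
    and E0: "\<And>t. t \<in> {a..b} \<Longrightarrow> E t [] = 0"
    and fu: "f u = g u"
  shows "t \<in> {a..b} \<Longrightarrow> f t w = g t w"
proof (induction "length w" arbitrary: w t rule: less_induct)
  case less
  have d: "((\<lambda>t. f t w - g t w) has_real_derivative 0) (at t within {a..b})" if t: "t \<in> {a..b}" for t
  proof -
    have "((\<lambda>t. f t w - g t w) has_real_derivative conc (f t) (E t) w - conc (g t) (E t) w) (at t within {a..b})"
      by (intro DERIV_diff df dg t)
    moreover have "conc (f t) (E t) w - conc (g t) (E t) w = 0"
    proof -
      have "conc (f t) (E t) w - conc (g t) (E t) w = (\<Sum>k\<le>length w. (f t (take k w) - g t (take k w)) * E t (drop k w))"
        unfolding conc_def by (simp add: sum_subtractf left_diff_distrib)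
      also have "\<dots> = 0"
      proof (intro sum.neutral ballI)
        fix k assume k: "k \<in> {..length w}"
        show "(f t (take k w) - g t (take k w)) * E t (drop k w) = 0"
        proof (cases "k = length w")
          case True then show ?thesis using E0[OF t] by simp
        next
          case False
          then have "length (take k w) < length w" using k by auto
          then show ?thesis using less.hyps t by simp
        qed
      qed
      finally show ?thesis .
    qed
    ultimately show ?thesis by simp
  qed
  obtain c where c: "\<forall>x\<in>{a..b}. f x w - g x w = c"
    using has_field_derivative_zero_constant[of "{a..b}" "\<lambda>t. f t w - g t w"] d by auto
  have "c = 0" using c u fu by force
  then show ?case using c less.prems by auto
qed

lemma ode_unique_left:
  fixes f g :: "real \<Rightarrow> 'a series" and a b :: real
  assumes cf: "\<And>w. continuous_on {a..b} (\<lambda>t. f t w)"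
    and cg: "\<And>w. continuous_on {a..b} (\<lambda>t. g t w)"
    and df: "\<And>t w. t \<in> {a..b} - {b} \<Longrightarrow> ((\<lambda>t. f t w) has_real_derivative conc (f t) (E t) w) (at t within {a..b})"
    and dg: "\<And>t w. t \<in> {a..b} - {b} \<Longrightarrow> ((\<lambda>t. g t w) has_real_derivative conc (g t) (E t) w) (at t within {a..b})"
    and E0: "\<And>t. t \<in> {a..b} - {b} \<Longrightarrow> E t [] = 0"
    and fu: "f a = g a"
  shows "t \<in> {a..b} \<Longrightarrow> f t w = g t w"
proof (induction "length w" arbitrary: w t rule: less_induct)
  case less
  have d: "((\<lambda>t. f t w - g t w) has_real_derivative 0) (at t within {a..b})" if t: "t \<in> {a..b} - {b}" for t
  proof -
    have "((\<lambda>t. f t w - g t w) has_real_derivative conc (f t) (E t) w - conc (g t) (E t) w) (at t within {a..b})"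
      by (intro DERIV_diff df dg t)
    moreover have "conc (f t) (E t) w - conc (g t) (E t) w = 0"
    proof -
      have "conc (f t) (E t) w - conc (g t) (E t) w = (\<Sum>k\<le>length w. (f t (take k w) - g t (take k w)) * E t (drop k w))"
        unfolding conc_def by (simp add: sum_subtractf left_diff_distrib)
      also have "\<dots> = 0"
      proof (intro sum.neutral ballI)
        fix k assume k: "k \<in> {..length w}"
        show "(f t (take k w) - g t (take k w)) * E t (drop k w) = 0"
        proof (cases "k = length w")
          case True then show ?thesis using E0[OF t] by simp
        next
          case False
          then have "length (take k w) < length w" using k by auto
          then show ?thesis using less.hyps t by simp
        qed
      qed
      finally show ?thesis .
    qed
    ultimately show ?thesis by simp
  qed
  have z: "(\<lambda>h::real. 0 * h) = (\<lambda>h. 0)" by auto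
  have "f t w - g t w = 0"
  proof (rule has_derivative_zero_unique_strong_interval[of "{b}" a b "\<lambda>t. f t w - g t w" 0 t])
    show "continuous_on {a..b} (\<lambda>t. f t w - g t w)" by (intro continuous_on_diff cf cg)
    show "f a w - g a w = 0" using fu by simp
    show "((\<lambda>t. f t w - g t w) has_derivative (\<lambda>h. 0)) (at x within {a..b})" if "x \<in> {a..b} - {b}" for x
      using d[OF that] unfolding has_field_derivative_def z .
  qed (use less.prems in auto)
  then show ?case by simp
qed

function Xc :: "real \<Rightarrow> nat \<Rightarrow> (real \<Rightarrow> real \<Rightarrow> ('a::finite) series) \<Rightarrow> real \<Rightarrow> real \<Rightarrow> 'a list \<Rightarrow> real" where
  "Xc T N Y s t w = (if length w \<le> N then Y s t w else
     integral {0..t} (\<lambda>r. \<Sum>k<length w. Xc T N Y s r (take k w) * diag_deriv T Y r (drop k w))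
   - integral {0..s} (\<lambda>r. \<Sum>k<length w. Xc T N Y s r (take k w) * diag_deriv T Y r (drop k w)))"
  by pat_completeness auto
termination by (relation "Wellfounded.measure (\<lambda>(T,N,Y,s,t,w). length w)") auto

declare Xc.simps[simp del]

lemma sum_atMost_last: "(\<Sum>k\<le>(n::nat). f k) = (\<Sum>k<n. f k) + (f n :: real)"
  by (metis sum.lessThan_Suc lessThan_Suc_atMost)

context
  fixes T :: real and N :: nat and Y :: "real \<Rightarrow> real \<Rightarrow> ('a::finite) series"
  assumes T: "T > 0" and Y: "nsgrm T N Y"
begin

lemma Xc_short: "length w \<le> N \<Longrightarrow> Xc T N Y s t w = Y s t w"
  by (subst Xc.simps) simp

lemma Xc_main:
  assumes s: "s \<in> {0..T}"
  shows "smooth_on {0..T} (\<lambda>t. Xc T N Y s t w) \<and>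
    (\<forall>t\<in>{0..T}. ((\<lambda>t. Xc T N Y s t w) has_real_derivative conc (Xc T N Y s t) (diag_deriv T Y t) w) (at t within {0..T}))"
proof (induction "length w" arbitrary: w rule: less_induct)
  case less
  show ?case
  proof (cases "length w \<le> N")
    case True
    have sm: "smooth_on {0..T} (\<lambda>t. Xc T N Y s t w)"
      by (rule smooth_cong[OF nsgrm_smooth[OF Y s]]) (simp add: Xc_short True)
    have "((\<lambda>t. Xc T N Y s t w) has_real_derivative conc (Xc T N Y s t) (diag_deriv T Y t) w) (at t within {0..T})"
      if t: "t \<in> {0..T}" for t
    proof -
      have eq: "conc (Xc T N Y s t) (diag_deriv T Y t) w = conc (Y s t) (diag_deriv T Y t) w"
        unfolding conc_def using True by (intro sum.cong refl) (simp add: Xc_short)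
      show ?thesis unfolding eq
        by (rule deriv_transform[OF nsgrm_ode[OF T Y s t True] t]) (simp add: Xc_short True)
    qed
    then show ?thesis using sm by blast
  next
    case False
    define h where "h = (\<lambda>r. \<Sum>k<length w. Xc T N Y s r (take k w) * diag_deriv T Y r (drop k w))"
    have hsm: "smooth_on {0..T} h"
      unfolding h_def
    proof (intro smooth_sum, simp)
      fix k assume k: "k \<in> {..<length w}"
      then have "length (take k w) < length w" by auto
      then show "smooth_on {0..T} (\<lambda>r. Xc T N Y s r (take k w) * diag_deriv T Y r (drop k w))"
        using less.hyps by (intro smooth_mul DY_smooth[OF T Y]) blast
    qed
    have Xeq: "Xc T N Y s t w = integral {0..t} h - integral {0..s} h" for t
      by (subst Xc.simps) (simp add: False h_def)
    have hc: "h t = conc (Xc T N Y s t) (diag_deriv T Y t) w" if t: "t \<in> {0..T}" for t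
      unfolding conc_def sum_atMost_last h_def using DY_Nil[OF T Y t] by simp
    have der: "((\<lambda>t. Xc T N Y s t w) has_real_derivative h t) (at t within {0..T})" if t: "t \<in> {0..T}" for t
    proof -
      have "((\<lambda>t. integral {0..t} h - integral {0..s} h) has_real_derivative h t - 0) (at t within {0..T})"
        by (intro DERIV_diff integral_has_real_derivative smooth_cont hsm t DERIV_const)
      then show ?thesis unfolding Xeq by simp
    qed
    have "smooth_on {0..T} (\<lambda>t. Xc T N Y s t w)"
      by (rule smooth_derivI[OF _ hsm]) (use der in \<open>auto simp: dtw_def\<close>)
    then show ?thesis using der hc by auto
  qed
qed

lemma Xc_smooth: "s \<in> {0..T} \<Longrightarrow> smooth_on {0..T} (\<lambda>t. Xc T N Y s t w)"
  using Xc_main by blast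

lemma Xc_ode: "s \<in> {0..T} \<Longrightarrow> t \<in> {0..T} \<Longrightarrow>
   ((\<lambda>t. Xc T N Y s t w) has_real_derivative conc (Xc T N Y s t) (diag_deriv T Y t) w) (at t within {0..T})"
  using Xc_main by blast

lemma Xc_diag: "s \<in> {0..T} \<Longrightarrow> Xc T N Y s s = one"
proof (rule ext)
  fix w :: "'a list"
  assume s: "s \<in> {0..T}"
  show "Xc T N Y s s w = one w"
  proof (cases "length w \<le> N")
    case True then show ?thesis using nsgrm_diag[OF Y s] by (simp add: Xc_short)
  next
    case False
    then have "w \<noteq> []" by auto
    then show ?thesis using False by (subst Xc.simps) (cases w, auto)
  qed
qed

lemma Xc_dd: "s \<in> {0..T} \<Longrightarrow> diag_deriv T (Xc T N Y) s = diag_deriv T Y s"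
proof (rule ext)
  fix u assume s: "s \<in> {0..T}"
  show "diag_deriv T (Xc T N Y) s u = diag_deriv T Y s u"
    unfolding diag_deriv_def[of T "Xc T N Y"]
    using vd_eq[of 0 T s _ "diag_deriv T Y s u"] Xc_ode[OF s s, of u] T s
    by (simp add: Xc_diag)
qed

end

lemma ps_one: "pair_shuffle one v w = one v * one w"
proof (cases "v = [] \<or> w = []")
  case True then show ?thesis by (auto simp: one_def)
next
  case False
  then have "pair_shuffle one v w = 0" unfolding pair_shuffle_def
    by (intro sum.neutral ballI) (auto simp: one_def)
  then show ?thesis using False by (auto simp: one_def)
qed

lemma sum2_split:
  fixes n m :: nat
  shows "(\<Sum>i\<le>n. \<Sum>j\<le>m. a i * b j * ((if i = n then d j else 0) + (if j = m then e i else 0))) =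
   a n * (\<Sum>j\<le>m. b j * d j) + b m * (\<Sum>i\<le>n. a i * (e i::real))"
proof -
  have "(\<Sum>i\<le>n. \<Sum>j\<le>m. a i * b j * ((if i = n then d j else 0) + (if j = m then e i else 0))) =
     (\<Sum>i\<le>n. (if i = n then a i * (\<Sum>j\<le>m. b j * d j) else 0) + a i * b m * e i)"
  proof (intro sum.cong refl)
    fix i assume "i \<in> {..n}"
    have "(\<Sum>j\<le>m. a i * b j * ((if i = n then d j else 0) + (if j = m then e i else 0))) =
       (\<Sum>j\<le>m. (if i = n then a i * (b j * d j) else 0)) + (\<Sum>j\<le>m. (if j = m then a i * b j * e i else 0))"
      by (simp only: sum.distrib[symmetric]) (intro sum.cong refl, simp add: algebra_simps)
    also have "\<dots> = (if i = n then a i * (\<Sum>j\<le>m. b j * d j) else 0) + a i * b m * e i"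
      by (cases "i = n") (simp_all add: sum_distrib_left sum.delta)
    finally show "(\<Sum>j\<le>m. a i * b j * ((if i = n then d j else 0) + (if j = m then e i else 0))) =
       (if i = n then a i * (\<Sum>j\<le>m. b j * d j) else 0) + a i * b m * e i" .
  qed
  also have "\<dots> = a n * (\<Sum>j\<le>m. b j * d j) + b m * (\<Sum>i\<le>n. a i * e i)"
    by (simp add: sum.distrib sum_distrib_left mult.assoc mult.left_commute)
  finally show ?thesis .
qed

context
  fixes T :: real and N :: nat and Y :: "real \<Rightarrow> real \<Rightarrow> ('a::finite) series"
  assumes T: "T > 0" and Y: "nsgrm T N Y"
begin

lemma Xc_chen:
  assumes s: "s \<in> {0..T}" and u: "u \<in> {0..T}" and t: "t \<in> {0..T}"
  shows "conc (Xc T N Y s u) (Xc T N Y u t) = Xc T N Y s t"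
proof (rule ext)
  fix w
  show "conc (Xc T N Y s u) (Xc T N Y u t) w = Xc T N Y s t w"
  proof (rule ode_unique[where f="\<lambda>t. conc (Xc T N Y s u) (Xc T N Y u t)" and g="\<lambda>t. Xc T N Y s t"
        and E="\<lambda>t. diag_deriv T Y t" and a=0 and b=T and u=u, OF u _ _ _ _ t])
    fix r w assume r: "r \<in> {0..T}"
    have "((\<lambda>r. conc (Xc T N Y s u) (Xc T N Y u r) w) has_real_derivative
        conc (Xc T N Y s u) (conc (Xc T N Y u r) (diag_deriv T Y r)) w) (at r within {0..T})"
      unfolding conc_def[of "Xc T N Y s u"] by (intro DERIV_sum DERIV_cmult Xc_ode[OF T Y u r])
    then show "((\<lambda>r. conc (Xc T N Y s u) (Xc T N Y u r) w) has_real_derivative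
        conc (conc (Xc T N Y s u) (Xc T N Y u r)) (diag_deriv T Y r) w) (at r within {0..T})"
      by (simp add: conc_assoc)
    show "((\<lambda>r. Xc T N Y s r w) has_real_derivative conc (Xc T N Y s r) (diag_deriv T Y r) w) (at r within {0..T})"
      by (rule Xc_ode[OF T Y s r])
    show "diag_deriv T Y r [] = 0" by (rule DY_Nil[OF T Y r])
  next
    show "conc (Xc T N Y s u) (Xc T N Y u u) = Xc T N Y s u" by (simp add: Xc_diag[OF T Y u])
  qed
qed

lemma Xc_shuffle:
  assumes s: "s \<in> {0..T}"
  shows "t \<in> {0..T} \<Longrightarrow> pair_shuffle (Xc T N Y s t) v w = Xc T N Y s t v * Xc T N Y s t w"
proof (induction "length v + length w" arbitrary: v w t rule: less_induct)
  case less
  define X where "X = Xc T N Y s"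
  define D where "D = diag_deriv T Y"
  have eqv: "pair_shuffle (conc (X t') (D t')) v w = conc (X t') (D t') v * X t' w + conc (X t') (D t') w * X t' v"
    if t': "t' \<in> {0..T}" for t'
  proof -
    have "pair_shuffle (conc (X t') (D t')) v w = (\<Sum>i\<le>length v. \<Sum>j\<le>length w.
        pair_shuffle (X t') (take i v) (take j w) * pair_shuffle (D t') (drop i v) (drop j w))"
      by (rule ps_conc)
    also have "\<dots> = (\<Sum>i\<le>length v. \<Sum>j\<le>length w. X t' (take i v) * X t' (take j w) *
        ((if i = length v then D t' (drop j w) else 0) + (if j = length w then D t' (drop i v) else 0)))"
    proof (intro sum.cong refl)
      fix i j assume i: "i \<in> {..length v}" and j: "j \<in> {..length w}"
      have D0: "D t' [] = 0" unfolding D_def by (rule DY_Nil[OF T Y t'])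
      have pd: "pair_shuffle (D t') (drop i v) (drop j w) =
          (if i = length v then D t' (drop j w) else 0) + (if j = length w then D t' (drop i v) else 0)"
      proof (cases "i = length v")
        case True then show ?thesis using D0 by simp
      next
        case False
        show ?thesis
        proof (cases "j = length w")
          case True then show ?thesis using False by simp
        next
          case False2: False
          have "drop i v \<noteq> []" "drop j w \<noteq> []" using i j False False2 by auto
          then show ?thesis using False False2 DY_prim[OF T Y t'] unfolding D_def by simp
        qed
      qed
      show "pair_shuffle (X t') (take i v) (take j w) * pair_shuffle (D t') (drop i v) (drop j w) =
          X t' (take i v) * X t' (take j w) *
        ((if i = length v then D t' (drop j w) else 0) + (if j = length w then D t' (drop i v) else 0))"
      proof (cases "i = length v \<and> j = length w")
        case True then show ?thesis using D0 by simp
      next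
        case False
        then have "length (take i v) + length (take j w) < length v + length w" using i j by auto
        then have "pair_shuffle (X t') (take i v) (take j w) = X t' (take i v) * X t' (take j w)"
          using less.hyps t' unfolding X_def by blast
        then show ?thesis using pd by simp
      qed
    qed
    also have "\<dots> = X t' (take (length v) v) * (\<Sum>j\<le>length w. X t' (take j w) * D t' (drop j w))
        + X t' (take (length w) w) * (\<Sum>i\<le>length v. X t' (take i v) * D t' (drop i v))"
      by (rule sum2_split)
    finally show ?thesis unfolding conc_def by simp
  qed
  have d: "((\<lambda>t. pair_shuffle (X t) v w - X t v * X t w) has_real_derivative 0) (at t' within {0..T})"
    if t': "t' \<in> {0..T}" for t'
  proof -
    have "((\<lambda>t. pair_shuffle (X t) v w - X t v * X t w) has_real_derivative
        pair_shuffle (conc (X t') (D t')) v w - (conc (X t') (D t') v * X t' w + conc (X t') (D t') w * X t' v))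
        (at t' within {0..T})"
      unfolding X_def D_def
      by (intro DERIV_diff DERIV_mult ps_deriv Xc_ode[OF T Y s t'])
    then show ?thesis using eqv[OF t'] by simp
  qed
  obtain c where c: "\<forall>x\<in>{0..T}. pair_shuffle (X x) v w - X x v * X x w = c"
    using has_field_derivative_zero_constant[of "{0..T}" "\<lambda>t. pair_shuffle (X t) v w - X t v * X t w"] d by auto
  have "c = 0" using c[rule_format, OF s] Xc_diag[OF T Y s] unfolding X_def by (simp add: ps_one)
  then show ?case using c less.prems unfolding X_def by auto
qed

lemma Xc_sgrm: "sgrm T (Xc T N Y)"
proof -
  have T0: "0 \<in> {0..T}" using T by simp
  have "Xc T N Y 0 0 [] \<noteq> 0" using Xc_diag[OF T Y T0] by simp
  then show ?thesis unfolding sgrm_def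
    using T0 Xc_shuffle Xc_chen Xc_smooth[OF T Y] by blast
qed

lemma Xc_minext: "minimal_extension T N (Xc T N Y) Y"
  unfolding minimal_extension_def extension_def
  using Xc_sgrm Xc_short[OF T Y] Xc_dd[OF T Y] DY_lie[OF T Y] by auto

end

context
  fixes T :: real
  assumes T: "T > 0"
begin

lemma minext_dd:
  assumes Y: "nsgrm T N Y" and M: "minimal_extension T N X Y" and s: "s \<in> {0..T}"
  shows "diag_deriv T X s = diag_deriv T Y s"
proof (rule ext)
  fix u :: "'a list"
  have X: "sgrm T X" and ext: "\<And>s t w. s \<in> {0..T} \<Longrightarrow> t \<in> {0..T} \<Longrightarrow> length w \<le> N \<Longrightarrow> X s t w = Y s t w"
    and lie: "diag_deriv T X s \<in> lieN N"
    using M s unfolding minimal_extension_def extension_def by auto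
  show "diag_deriv T X s u = diag_deriv T Y s u"
  proof (cases "length u \<le> N")
    case True
    have "((\<lambda>t. Y s t u) has_real_derivative diag_deriv T X s u) (at s within {0..T})"
      by (rule deriv_transform[OF sgrm_dd[OF T X s] s]) (use ext s True in auto)
    then show ?thesis using uniq0[OF T s _ nsgrm_dd[OF T Y s]] by blast
  next
    case False
    obtain L where "diag_deriv T X s = proj N L" using lie unfolding lieN_def by blast
    then have "diag_deriv T X s u = 0" using False by (simp add: proj_def)
    then show ?thesis using DY_big[OF T Y s] False by simp
  qed
qed

lemma minext_ode:
  assumes Y: "nsgrm T N Y" and M: "minimal_extension T N X Y" and s: "s \<in> {0..T}" and t: "t \<in> {0..T}"
  shows "((\<lambda>t. X s t w) has_real_derivative conc (X s t) (diag_deriv T Y t) w) (at t within {0..T})"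
proof -
  have X: "sgrm T X" using M unfolding minimal_extension_def by auto
  show ?thesis using sgrm_ode[OF T X s t] minext_dd[OF Y M t] by simp
qed

lemma minext_unique:
  assumes Y: "nsgrm T N Y" and M: "minimal_extension T N X Y" and M': "minimal_extension T N X' Y"
    and s: "s \<in> {0..T}" and t: "t \<in> {0..T}"
  shows "X s t = X' s t"
proof (rule ext)
  fix w
  have X: "sgrm T X" and X': "sgrm T X'" using M M' unfolding minimal_extension_def by auto
  show "X s t w = X' s t w"
    by (rule ode_unique[where f="X s" and g="X' s" and E="diag_deriv T Y" and a=0 and b=T and u=s, OF s _ _ _ _ t])
       (auto intro: minext_ode[OF Y M s] minext_ode[OF Y M' s] DY_Nil[OF T Y] simp: sgrm_diag[OF X s] sgrm_diag[OF X' s])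
qed

lemma local_dd:
  assumes Y: "nsgrm T N Y" and Y': "nsgrm T N Y'" and r: "r \<in> {0..T}" and rt: "r < t" and tT: "t \<le> T"
    and eq: "\<And>b. b \<in> {r..t} \<Longrightarrow> Y r b = Y' r b"
  shows "diag_deriv T Y r = diag_deriv T Y' r"
proof (rule ext)
  fix u
  have sub: "{r..t} \<subseteq> {0..T}" using r tT by auto
  have rin: "r \<in> {r..t}" using rt by simp
  have d1: "((\<lambda>b. Y' r b u) has_real_derivative diag_deriv T Y r u) (at r within {r..t})"
    by (rule deriv_transform[OF DERIV_subset[OF nsgrm_dd[OF T Y r] sub] rin]) (simp add: eq)
  have d2: "((\<lambda>b. Y' r b u) has_real_derivative diag_deriv T Y' r u) (at r within {r..t})"
    by (rule DERIV_subset[OF nsgrm_dd[OF T Y' r] sub])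
  show "diag_deriv T Y r u = diag_deriv T Y' r u" by (rule deriv_unique_int[OF rt rin d1 d2])
qed

lemma minext_local:
  assumes Y: "nsgrm T N Y" and Y': "nsgrm T N Y'"
    and M: "minimal_extension T N X Y" and M': "minimal_extension T N X' Y'"
    and st: "0 \<le> s" "s \<le> t" "t \<le> T"
    and H: "\<forall>a\<in>{s..t}. \<forall>b\<in>{s..t}. Y a b = Y' a b"
  shows "X s t = X' s t"
proof -
  have X: "sgrm T X" and X': "sgrm T X'" using M M' unfolding minimal_extension_def by auto
  have s: "s \<in> {0..T}" and t: "t \<in> {0..T}" using st by auto
  show ?thesis
  proof (cases "s = t")
    case True then show ?thesis using sgrm_diag[OF X s] sgrm_diag[OF X' s] by simp
  next
    case False
    then have lt: "s < t" using st by simp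
    have sub: "{s..t} \<subseteq> {0..T}" using st by auto
    show ?thesis
    proof (rule ext)
      fix w
      show "X s t w = X' s t w"
      proof (rule ode_unique_left[where f="X s" and g="X' s" and E="diag_deriv T Y" and a=s and b=t])
        fix w
        show "continuous_on {s..t} (\<lambda>r. X s r w)"
          by (rule continuous_on_subset[OF smooth_cont[OF sgrm_smooth[OF X s]] sub])
        show "continuous_on {s..t} (\<lambda>r. X' s r w)"
          by (rule continuous_on_subset[OF smooth_cont[OF sgrm_smooth[OF X' s]] sub])
      next
        fix r w assume r: "r \<in> {s..t} - {t}"
        then have r0: "r \<in> {0..T}" using sub by auto
        show "((\<lambda>r. X s r w) has_real_derivative conc (X s r) (diag_deriv T Y r) w) (at r within {s..t})"
          by (rule DERIV_subset[OF minext_ode[OF Y M s r0] sub])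
        have "diag_deriv T Y r = diag_deriv T Y' r"
          by (rule local_dd[OF Y Y' r0 _ st(3)]) (use r H in auto)
        then show "((\<lambda>r. X' s r w) has_real_derivative conc (X' s r) (diag_deriv T Y r) w) (at r within {s..t})"
          using DERIV_subset[OF minext_ode[OF Y' M' s r0] sub] by simp
        show "diag_deriv T Y r [] = 0" by (rule DY_Nil[OF T Y r0])
      next
        show "X s s = X' s s" using sgrm_diag[OF X s] sgrm_diag[OF X' s] by simp
      qed (use st in auto)
    qed
  qed
qed

end

theorem theorem2p8:
  fixes T :: real and N :: nat and Y :: "real \<Rightarrow> real \<Rightarrow> ('a::finite) list \<Rightarrow> real"
  assumes "T > 0" and "nsgrm T N Y"
  shows "(\<exists>X. minimal_extension T N X Y)
    \<and> (\<forall>X X'. minimal_extension T N X Y \<longrightarrow> minimal_extension T N X' Y \<longrightarrow>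
          (\<forall>s\<in>{0..T}. \<forall>t\<in>{0..T}. X s t = X' s t))
    \<and> (\<forall>X. minimal_extension T N X Y \<longrightarrow>
          (\<forall>s\<in>{0..T}. diag_deriv T X s = diag_deriv T Y s))
    \<and> (\<forall>Y' X X' s t. nsgrm T N Y' \<longrightarrow> minimal_extension T N X Y \<longrightarrow>
          minimal_extension T N X' Y' \<longrightarrow> 0 \<le> s \<longrightarrow> s \<le> t \<longrightarrow> t \<le> T \<longrightarrow>
          (\<forall>u v. s \<le> u \<longrightarrow> u \<le> v \<longrightarrow> v \<le> t \<longrightarrow>
             (\<forall>a\<in>{u..v}. \<forall>b\<in>{u..v}. Y a b = Y' a b)) \<longrightarrow>
          X s t = X' s t)"
proof (intro conjI allI impI ballI)
  show "\<exists>X. minimal_extension T N X Y" using Xc_minext[OF assms] by blast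
next
  fix X X' s t
  assume "minimal_extension T N X Y" "minimal_extension T N X' Y" "s \<in> {0..T}" "t \<in> {0..T}"
  then show "X s t = X' s t" using minext_unique[OF assms(1,2)] by blast
next
  fix X s
  assume "minimal_extension T N X Y" "s \<in> {0..T}"
  then show "diag_deriv T X s = diag_deriv T Y s" using minext_dd[OF assms(1,2)] by blast
next
  fix Y' X X' s t
  assume Y': "nsgrm T N Y'" and M: "minimal_extension T N X Y" and M': "minimal_extension T N X' Y'"
    and st: "0 \<le> s" "s \<le> t" "t \<le> T"
    and H: "\<forall>u v. s \<le> u \<longrightarrow> u \<le> v \<longrightarrow> v \<le> t \<longrightarrow> (\<forall>a\<in>{u..v}. \<forall>b\<in>{u..v}. Y a b = Y' a b)"
  have "\<forall>a\<in>{s..t}. \<forall>b\<in>{s..t}. Y a b = Y' a b" using H st by blast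
  then show "X s t = X' s t" using minext_local[OF assms(1,2) Y' M M' st] by blast
qed

end
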